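(* Let $(\chi,u)$ be a rooted chirotope with ground set $X\cup\{u\}$, and let $\widetilde\chi$ be the function on ordered triples of distinct elements of $X\cup\{v\}$ ($v$ a new element) defined by $\widetilde\chi(x,y,z)=\chi(x,y,z)$ for $x,y,z\in X$ and $\widetilde\chi(x,y,v)=-\chi(x,y,u)$ for distinct $x,y\in X$ (extended to all orderings by the alternating symmetry). Then $\widetilde\chi$ is a chirotope. Moreover, if $\chi$ is realizable, then $\widetilde\chi$ is realizable as well.
   Context: For a finite set $E$, a sign function on $E$ is a map $\chi$ from ordered triples of distinct elements of $E$ to $\{-1,1\}$ with $\chi(x,y,z)=\chi(y,z,x)=\chi(z,x,y)=-\chi(z,y,x)=-\chi(y,x,z)=-\chi(x,z,y)$. A chirotope is a sign function that moreover satisfies: (interiority) for distinct $t,x,y,z$, if $\chi(t,y,z)=\chi(x,t,z)=\chi(x,y,t)=1$ then $\chi(x,y,z)=1$; (transitivity) for distinct $s,t,x,y,z$, if $\chi(t,s,x)=\chi(t,s,y)=\chi(t,s,z)=\chi(x,y,t)=\chi(y,z,t)=1$ then $\chi(x,z,t)=1$. It is realizable if there are points in $\mathbb R^2$, no three collinear, indexed by $E$, with $\chi(x,y,z)=1$ iff the corresponding points are in counterclockwise order. An element $u$ is extreme if there is $y\ne u$ with $\chi(u,y,z)$ constant over $z\in E\setminus\{u,y\}$; a rooted chirotope is a pair $(\chi,u)$ with $u$ extreme. The rooted pair $(\widetilde\chi,v)$ is called the twist of $(\chi,u)$. *)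

theory Defs
  imports Main "HOL-Analysis.Analysis"
begin

type_synonym 'a signfun = "'a \<Rightarrow> 'a \<Rightarrow> 'a \<Rightarrow> int"

definition sign_function :: "'a signfun \<Rightarrow> 'a set \<Rightarrow> bool" where
  "sign_function chi E \<longleftrightarrow> finite E \<and>
     (\<forall>x\<in>E. \<forall>y\<in>E. \<forall>z\<in>E. distinct [x,y,z] \<longrightarrow>
        chi x y z \<in> {-1, 1} \<and>
        chi x y z = chi y z x \<and> chi x y z = chi z x y \<and>
        chi x y z = - chi z y x \<and> chi x y z = - chi y x z \<and> chi x y z = - chi x z y)"

definition chirotope :: "'a signfun \<Rightarrow> 'a set \<Rightarrow> bool" where
  "chirotope chi E \<longleftrightarrow> sign_function chi E \<and>
     (\<forall>t\<in>E. \<forall>x\<in>E. \<forall>y\<in>E. \<forall>z\<in>E. distinct [t,x,y,z] \<longrightarrow>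
        chi t y z = 1 \<longrightarrow> chi x t z = 1 \<longrightarrow> chi x y t = 1 \<longrightarrow> chi x y z = 1) \<and>
     (\<forall>s\<in>E. \<forall>t\<in>E. \<forall>x\<in>E. \<forall>y\<in>E. \<forall>z\<in>E. distinct [s,t,x,y,z] \<longrightarrow>
        chi t s x = 1 \<longrightarrow> chi t s y = 1 \<longrightarrow> chi t s z = 1 \<longrightarrow>
        chi x y t = 1 \<longrightarrow> chi y z t = 1 \<longrightarrow> chi x z t = 1)"

definition orient :: "real \<times> real \<Rightarrow> real \<times> real \<Rightarrow> real \<times> real \<Rightarrow> real" where
  "orient p q r = (fst q - fst p) * (snd r - snd p) - (snd q - snd p) * (fst r - fst p)"

definition realizable :: "'a signfun \<Rightarrow> 'a set \<Rightarrow> bool" where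
  "realizable chi E \<longleftrightarrow> (\<exists>P :: 'a \<Rightarrow> real \<times> real.
     (\<forall>x\<in>E. \<forall>y\<in>E. \<forall>z\<in>E. distinct [x,y,z] \<longrightarrow>
        orient (P x) (P y) (P z) \<noteq> 0 \<and>
        (chi x y z = 1 \<longleftrightarrow> orient (P x) (P y) (P z) > 0)))"

definition extreme :: "'a signfun \<Rightarrow> 'a set \<Rightarrow> 'a \<Rightarrow> bool" where
  "extreme chi E u \<longleftrightarrow> u \<in> E \<and> (\<exists>y\<in>E. y \<noteq> u \<and>
     (\<forall>z\<in>E - {u, y}. \<forall>z'\<in>E - {u, y}. chi u y z = chi u y z'))"

definition rooted_chirotope :: "'a signfun \<Rightarrow> 'a set \<Rightarrow> 'a \<Rightarrow> bool" where
  "rooted_chirotope chi E u \<longleftrightarrow> chirotope chi E \<and> extreme chi E u"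

definition twist :: "'a signfun \<Rightarrow> 'a \<Rightarrow> 'a \<Rightarrow> 'a signfun" where
  "twist chi u v x y z =
     (if x = v then - chi y z u
      else if y = v then - chi z x u
      else if z = v then - chi x y u
      else chi x y z)"

end

theory Submission
  imports Defs
begin

lemma SF:
  assumes ch: "chirotope chi E" and "a \<in> E" "b \<in> E" "c \<in> E" "distinct [a,b,c]"
  shows "(chi a b c = 1 \<or> chi a b c = -1) \<and> chi b c a = chi a b c \<and> chi c a b = chi a b c \<and> chi c b a = - chi a b c \<and> chi b a c = - chi a b c \<and> chi a c b = - chi a b c"
proof -
  have "sign_function chi E" using ch unfolding chirotope_def by blast
  then have "chi a b c \<in> {-1, 1} \<and>
        chi a b c = chi b c a \<and> chi a b c = chi c a b \<and>
        chi a b c = - chi c b a \<and> chi a b c = - chi b a c \<and> chi a b c = - chi a c b"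
    using assms(2-5) unfolding sign_function_def by blast
  then show ?thesis by auto
qed

lemma CI:
  assumes ch: "chirotope chi E" and "t \<in> E" "x \<in> E" "y \<in> E" "z \<in> E" "distinct [t,x,y,z]"
  shows "chi t y z = 1 \<longrightarrow> chi x t z = 1 \<longrightarrow> chi x y t = 1 \<longrightarrow> chi x y z = 1"
  using assms unfolding chirotope_def by blast

lemma CT:
  assumes ch: "chirotope chi E" and "s \<in> E" "t \<in> E" "x \<in> E" "y \<in> E" "z \<in> E" "distinct [s,t,x,y,z]"
  shows "chi t s x = 1 \<longrightarrow> chi t s y = 1 \<longrightarrow> chi t s z = 1 \<longrightarrow>
        chi x y t = 1 \<longrightarrow> chi y z t = 1 \<longrightarrow> chi x z t = 1"
  using assms unfolding chirotope_def by blast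

lemma NI_gen:
  assumes ch: "chirotope chi E" and "u \<in> E" "w \<in> E" "a \<in> E" "b \<in> E" "c \<in> E"
    and "distinct [u,w,a,b,c]" and "chi u w a = chi u w b" and "chi u w b = chi u w c"
  shows "\<not> (chi u a b = chi u b c \<and> chi u b c = chi u c a)"
proof -
  have nu: "u \<noteq> w \<and> u \<noteq> a \<and> u \<noteq> b \<and> u \<noteq> c \<and> w \<noteq> u \<and> w \<noteq> a \<and> w \<noteq> b \<and> w \<noteq> c \<and> a \<noteq> u \<and> a \<noteq> w \<and> a \<noteq> b \<and> a \<noteq> c \<and> b \<noteq> u \<and> b \<noteq> w \<and> b \<noteq> a \<and> b \<noteq> c \<and> c \<noteq> u \<and> c \<noteq> w \<and> c \<noteq> a \<and> c \<noteq> b" using assms by auto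
  have s1: "(chi u w a = 1 \<or> chi u w a = -1) \<and> chi w a u = chi u w a \<and> chi a u w = chi u w a \<and> chi a w u = - chi u w a \<and> chi w u a = - chi u w a \<and> chi u a w = - chi u w a" using SF[OF ch, of u w a] assms nu by simp
  have s2: "(chi u w b = 1 \<or> chi u w b = -1) \<and> chi w b u = chi u w b \<and> chi b u w = chi u w b \<and> chi b w u = - chi u w b \<and> chi w u b = - chi u w b \<and> chi u b w = - chi u w b" using SF[OF ch, of u w b] assms nu by simp
  have s3: "(chi u w c = 1 \<or> chi u w c = -1) \<and> chi w c u = chi u w c \<and> chi c u w = chi u w c \<and> chi c w u = - chi u w c \<and> chi w u c = - chi u w c \<and> chi u c w = - chi u w c" using SF[OF ch, of u w c] assms nu by simp
  have s4: "(chi u a b = 1 \<or> chi u a b = -1) \<and> chi a b u = chi u a b \<and> chi b u a = chi u a b \<and> chi b a u = - chi u a b \<and> chi a u b = - chi u a b \<and> chi u b a = - chi u a b" using SF[OF ch, of u a b] assms nu by simp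
  have s5: "(chi u a c = 1 \<or> chi u a c = -1) \<and> chi a c u = chi u a c \<and> chi c u a = chi u a c \<and> chi c a u = - chi u a c \<and> chi a u c = - chi u a c \<and> chi u c a = - chi u a c" using SF[OF ch, of u a c] assms nu by simp
  have s6: "(chi u b c = 1 \<or> chi u b c = -1) \<and> chi b c u = chi u b c \<and> chi c u b = chi u b c \<and> chi c b u = - chi u b c \<and> chi b u c = - chi u b c \<and> chi u c b = - chi u b c" using SF[OF ch, of u b c] assms nu by simp
  have s7: "(chi w a b = 1 \<or> chi w a b = -1) \<and> chi a b w = chi w a b \<and> chi b w a = chi w a b \<and> chi b a w = - chi w a b \<and> chi a w b = - chi w a b \<and> chi w b a = - chi w a b" using SF[OF ch, of w a b] assms nu by simp
  have s8: "(chi w a c = 1 \<or> chi w a c = -1) \<and> chi a c w = chi w a c \<and> chi c w a = chi w a c \<and> chi c a w = - chi w a c \<and> chi a w c = - chi w a c \<and> chi w c a = - chi w a c" using SF[OF ch, of w a c] assms nu by simp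
  have s9: "(chi w b c = 1 \<or> chi w b c = -1) \<and> chi b c w = chi w b c \<and> chi c w b = chi w b c \<and> chi c b w = - chi w b c \<and> chi b w c = - chi w b c \<and> chi w c b = - chi w b c" using SF[OF ch, of w b c] assms nu by simp
  have s10: "(chi a b c = 1 \<or> chi a b c = -1) \<and> chi b c a = chi a b c \<and> chi c a b = chi a b c \<and> chi c b a = - chi a b c \<and> chi b a c = - chi a b c \<and> chi a c b = - chi a b c" using SF[OF ch, of a b c] assms nu by simp
  have f11: "chi u w c = 1 \<longrightarrow> chi u w a = 1 \<longrightarrow> chi u w b = 1 \<longrightarrow> chi c a u = 1 \<longrightarrow> chi a b u = 1 \<longrightarrow> chi c b u = 1" using CT[OF ch, of w u c a b] assms nu by simp
  have c1: "\<not> (chi u w a = 1 \<and> chi u a b = 1 \<and> chi u b c = 1 \<and> chi u c a = 1)" using f11 s1 s2 s3 s4 s5 s6 s7 s8 s9 s10 assms(8,9) by (smt (z3))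
  have f12: "chi u w a = 1 \<longrightarrow> chi u w c = 1 \<longrightarrow> chi u w b = 1 \<longrightarrow> chi a c u = 1 \<longrightarrow> chi c b u = 1 \<longrightarrow> chi a b u = 1" using CT[OF ch, of w u a c b] assms nu by simp
  have c2: "\<not> (chi u w a = 1 \<and> chi u a b = -1 \<and> chi u b c = -1 \<and> chi u c a = -1)" using f12 s1 s2 s3 s4 s5 s6 s7 s8 s9 s10 assms(8,9) by (smt (z3))
  have f13: "chi a b u = 1 \<longrightarrow> chi a b c = 1 \<longrightarrow> chi a b w = 1 \<longrightarrow> chi u c a = 1 \<longrightarrow> chi c w a = 1 \<longrightarrow> chi u w a = 1" using CT[OF ch, of b a u c w] assms nu by simp
  have f14: "chi b c u = 1 \<longrightarrow> chi b c a = 1 \<longrightarrow> chi b c w = 1 \<longrightarrow> chi u a b = 1 \<longrightarrow> chi a w b = 1 \<longrightarrow> chi u w b = 1" using CT[OF ch, of c b u a w] assms nu by simp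
  have f15: "chi c a b = 1 \<longrightarrow> chi c a w = 1 \<longrightarrow> chi c a u = 1 \<longrightarrow> chi b w c = 1 \<longrightarrow> chi w u c = 1 \<longrightarrow> chi b u c = 1" using CT[OF ch, of a c b w u] assms nu by simp
  have f16: "chi w b a = 1 \<longrightarrow> chi c w a = 1 \<longrightarrow> chi c b w = 1 \<longrightarrow> chi c b a = 1" using CI[OF ch, of w c b a] assms nu by simp
  have f17: "chi w u a = 1 \<longrightarrow> chi w u b = 1 \<longrightarrow> chi w u c = 1 \<longrightarrow> chi a b w = 1 \<longrightarrow> chi b c w = 1 \<longrightarrow> chi a c w = 1" using CT[OF ch, of u w a b c] assms nu by simp
  have f18: "chi b a c = 1 \<longrightarrow> chi u b c = 1 \<longrightarrow> chi u a b = 1 \<longrightarrow> chi u a c = 1" using CI[OF ch, of b u a c] assms nu by simp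
  have c3: "\<not> (chi u w a = -1 \<and> chi u a b = 1 \<and> chi u b c = 1 \<and> chi u c a = 1)" using f13 f14 f15 f16 f17 f18 s1 s2 s3 s4 s5 s6 s7 s8 s9 s10 assms(8,9) by (smt (z3))
  have f19: "chi w u a = 1 \<longrightarrow> chi w u c = 1 \<longrightarrow> chi w u b = 1 \<longrightarrow> chi a c w = 1 \<longrightarrow> chi c b w = 1 \<longrightarrow> chi a b w = 1" using CT[OF ch, of u w a c b] assms nu by simp
  have f20: "chi c b w = 1 \<longrightarrow> chi c b u = 1 \<longrightarrow> chi c b a = 1 \<longrightarrow> chi w u c = 1 \<longrightarrow> chi u a c = 1 \<longrightarrow> chi w a c = 1" using CT[OF ch, of b c w u a] assms nu by simp
  have f21: "chi b u c = 1 \<longrightarrow> chi a b c = 1 \<longrightarrow> chi a u b = 1 \<longrightarrow> chi a u c = 1" using CI[OF ch, of b a u c] assms nu by simp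
  have f22: "chi a c u = 1 \<longrightarrow> chi a c b = 1 \<longrightarrow> chi a c w = 1 \<longrightarrow> chi u b a = 1 \<longrightarrow> chi b w a = 1 \<longrightarrow> chi u w a = 1" using CT[OF ch, of c a u b w] assms nu by simp
  have f23: "chi w u b = 1 \<longrightarrow> chi w u c = 1 \<longrightarrow> chi w u a = 1 \<longrightarrow> chi b c w = 1 \<longrightarrow> chi c a w = 1 \<longrightarrow> chi b a w = 1" using CT[OF ch, of u w b c a] assms nu by simp
  have f24: "chi b a c = 1 \<longrightarrow> chi b a w = 1 \<longrightarrow> chi b a u = 1 \<longrightarrow> chi c w b = 1 \<longrightarrow> chi w u b = 1 \<longrightarrow> chi c u b = 1" using CT[OF ch, of a b c w u] assms nu by simp
  have c4: "\<not> (chi u w a = -1 \<and> chi u a b = -1 \<and> chi u b c = -1 \<and> chi u c a = -1)" using f19 f20 f21 f22 f23 f24 s1 s2 s3 s4 s5 s6 s7 s8 s9 s10 assms(8,9) by (smt (z3))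
  show ?thesis using c1 c2 c3 c4 s1 s2 s3 s4 s5 s6 s7 s8 s9 s10 by (smt (z3))
qed

lemma NI_all:
  assumes ch: "chirotope chi (insert u X)" and uX: "u \<notin> X" and ex: "extreme chi (insert u X) u"
    and pX: "p \<in> X" and qX: "q \<in> X" and rX: "r \<in> X" and dpqr: "distinct [p,q,r]"
  shows "\<not> (chi u p q = chi u q r \<and> chi u q r = chi u r p)"
proof -
  obtain w where w0: "w \<in> insert u X" "w \<noteq> u" and wc: "\<forall>z\<in>insert u X - {u, w}. \<forall>z'\<in>insert u X - {u, w}. chi u w z = chi u w z'"
    using ex unfolding extreme_def by blast
  have w: "w \<in> X" using w0 by simp
  have E: "chi u w z = chi u w z'" if "z \<in> X" "z' \<in> X" "z \<noteq> w" "z' \<noteq> w" for z z'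
  proof -
    have "z \<in> insert u X - {u, w}" "z' \<in> insert u X - {u, w}" using that uX by auto
    then show ?thesis using wc by blast
  qed
  have up: "u \<noteq> p" "u \<noteq> q" "u \<noteq> r" "u \<noteq> w" using uX pX qX rX w by auto
  have pq: "p \<noteq> q" "p \<noteq> r" "q \<noteq> r" using dpqr by auto
  have m: "u \<in> insert u X" "p \<in> insert u X" "q \<in> insert u X" "r \<in> insert u X" "w \<in> insert u X"
    using pX qX rX w by auto
  have d1: "distinct [u,p,q]" "distinct [u,p,r]" "distinct [u,q,r]" using up pq by auto
  have S1: "chi u q p = - chi u p q" "chi u p q \<noteq> 0" using SF[OF ch m(1) m(2) m(3) d1(1)] by auto
  have S2: "chi u r p = - chi u p r" "chi u p r \<noteq> 0" using SF[OF ch m(1) m(2) m(4) d1(2)] by auto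
  have S3: "chi u r q = - chi u q r" "chi u q r \<noteq> 0" using SF[OF ch m(1) m(3) m(4) d1(3)] by auto
  show ?thesis
  proof (cases "w = p \<or> w = q \<or> w = r")
    case True
    then show ?thesis
    proof (elim disjE)
      assume "w = p" then have "chi u p q = chi u p r" using E[OF qX rX] pq by auto
      then show ?thesis using S1 S2 S3 by auto
    next
      assume "w = q" then have "chi u q r = chi u q p" using E[OF rX pX] pq by auto
      then show ?thesis using S1 S2 S3 by auto
    next
      assume "w = r" then have "chi u r p = chi u r q" using E[OF pX qX] pq by auto
      then show ?thesis using S1 S2 S3 by auto
    qed
  next
    case False
    then have dd: "distinct [u,w,p,q,r]" using up pq by auto
    have e1: "chi u w p = chi u w q" "chi u w q = chi u w r" using E pX qX rX False by auto
    show ?thesis using NI_gen[OF ch m(1) m(5) m(2) m(3) m(4) dd e1] .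
  qed
qed

lemma twI1:
  assumes ch: "chirotope chi (insert u X)" and "u \<notin> X" and "v \<notin> X"
    and NI: "\<And>p q r. p \<in> X \<Longrightarrow> q \<in> X \<Longrightarrow> r \<in> X \<Longrightarrow> distinct [p,q,r] \<Longrightarrow> \<not> (chi u p q = chi u q r \<and> chi u q r = chi u r p)"
    and mem: "a \<in> X" "b \<in> X" "c \<in> X" and dist: "distinct [a,b,c]"
  shows "twist chi u v v b c = 1 \<longrightarrow> twist chi u v a v c = 1 \<longrightarrow> twist chi u v a b v = 1 \<longrightarrow> twist chi u v a b c = 1"
proof -
  have nv: "a \<noteq> v \<and> b \<noteq> v \<and> c \<noteq> v" using assms(2,3) mem dist by auto
  have nu: "u \<noteq> a \<and> u \<noteq> b \<and> u \<noteq> c \<and> a \<noteq> u \<and> a \<noteq> b \<and> a \<noteq> c \<and> b \<noteq> u \<and> b \<noteq> a \<and> b \<noteq> c \<and> c \<noteq> u \<and> c \<noteq> a \<and> c \<noteq> b" using assms(2,3) mem dist by auto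
  have f1: "\<not> (chi u a b = chi u b c \<and> chi u b c = chi u c a)" using NI[of a b c] mem nu by simp
  have f2: "(chi u a b = 1 \<or> chi u a b = -1) \<and> chi a b u = chi u a b \<and> chi b u a = chi u a b \<and> chi b a u = - chi u a b \<and> chi a u b = - chi u a b \<and> chi u b a = - chi u a b" using SF[OF ch, of u a b] mem nu by simp
  have f3: "(chi u a c = 1 \<or> chi u a c = -1) \<and> chi a c u = chi u a c \<and> chi c u a = chi u a c \<and> chi c a u = - chi u a c \<and> chi a u c = - chi u a c \<and> chi u c a = - chi u a c" using SF[OF ch, of u a c] mem nu by simp
  have f4: "(chi u b c = 1 \<or> chi u b c = -1) \<and> chi b c u = chi u b c \<and> chi c u b = chi u b c \<and> chi c b u = - chi u b c \<and> chi b u c = - chi u b c \<and> chi u c b = - chi u b c" using SF[OF ch, of u b c] mem nu by simp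
  have f5: "(chi a b c = 1 \<or> chi a b c = -1) \<and> chi b c a = chi a b c \<and> chi c a b = chi a b c \<and> chi c b a = - chi a b c \<and> chi b a c = - chi a b c \<and> chi a c b = - chi a b c" using SF[OF ch, of a b c] mem nu by simp
  show ?thesis using nv f1 f2 f3 f4 f5 unfolding twist_def by (smt (z3))
qed

lemma twI2:
  assumes ch: "chirotope chi (insert u X)" and "u \<notin> X" and "v \<notin> X"
    and NI: "\<And>p q r. p \<in> X \<Longrightarrow> q \<in> X \<Longrightarrow> r \<in> X \<Longrightarrow> distinct [p,q,r] \<Longrightarrow> \<not> (chi u p q = chi u q r \<and> chi u q r = chi u r p)"
    and mem: "a \<in> X" "b \<in> X" "c \<in> X" and dist: "distinct [a,b,c]"
  shows "twist chi u v a b c = 1 \<longrightarrow> twist chi u v v a c = 1 \<longrightarrow> twist chi u v v b a = 1 \<longrightarrow> twist chi u v v b c = 1"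
proof -
  have nv: "a \<noteq> v \<and> b \<noteq> v \<and> c \<noteq> v" using assms(2,3) mem dist by auto
  have nu: "u \<noteq> a \<and> u \<noteq> b \<and> u \<noteq> c \<and> a \<noteq> u \<and> a \<noteq> b \<and> a \<noteq> c \<and> b \<noteq> u \<and> b \<noteq> a \<and> b \<noteq> c \<and> c \<noteq> u \<and> c \<noteq> a \<and> c \<noteq> b" using assms(2,3) mem dist by auto
  have f1: "\<not> (chi u a b = chi u b c \<and> chi u b c = chi u c a)" using NI[of a b c] mem nu by simp
  have f2: "(chi u a b = 1 \<or> chi u a b = -1) \<and> chi a b u = chi u a b \<and> chi b u a = chi u a b \<and> chi b a u = - chi u a b \<and> chi a u b = - chi u a b \<and> chi u b a = - chi u a b" using SF[OF ch, of u a b] mem nu by simp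
  have f3: "(chi u a c = 1 \<or> chi u a c = -1) \<and> chi a c u = chi u a c \<and> chi c u a = chi u a c \<and> chi c a u = - chi u a c \<and> chi a u c = - chi u a c \<and> chi u c a = - chi u a c" using SF[OF ch, of u a c] mem nu by simp
  have f4: "(chi u b c = 1 \<or> chi u b c = -1) \<and> chi b c u = chi u b c \<and> chi c u b = chi u b c \<and> chi c b u = - chi u b c \<and> chi b u c = - chi u b c \<and> chi u c b = - chi u b c" using SF[OF ch, of u b c] mem nu by simp
  have f5: "(chi a b c = 1 \<or> chi a b c = -1) \<and> chi b c a = chi a b c \<and> chi c a b = chi a b c \<and> chi c b a = - chi a b c \<and> chi b a c = - chi a b c \<and> chi a c b = - chi a b c" using SF[OF ch, of a b c] mem nu by simp
  show ?thesis using nv f1 f2 f3 f4 f5 unfolding twist_def by (smt (z3))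
qed

lemma twI3:
  assumes ch: "chirotope chi (insert u X)" and "u \<notin> X" and "v \<notin> X"
    and NI: "\<And>p q r. p \<in> X \<Longrightarrow> q \<in> X \<Longrightarrow> r \<in> X \<Longrightarrow> distinct [p,q,r] \<Longrightarrow> \<not> (chi u p q = chi u q r \<and> chi u q r = chi u r p)"
    and mem: "a \<in> X" "b \<in> X" "c \<in> X" and dist: "distinct [a,b,c]"
  shows "twist chi u v a v c = 1 \<longrightarrow> twist chi u v b a c = 1 \<longrightarrow> twist chi u v b v a = 1 \<longrightarrow> twist chi u v b v c = 1"
proof -
  have nv: "a \<noteq> v \<and> b \<noteq> v \<and> c \<noteq> v" using assms(2,3) mem dist by auto
  have nu: "u \<noteq> a \<and> u \<noteq> b \<and> u \<noteq> c \<and> a \<noteq> u \<and> a \<noteq> b \<and> a \<noteq> c \<and> b \<noteq> u \<and> b \<noteq> a \<and> b \<noteq> c \<and> c \<noteq> u \<and> c \<noteq> a \<and> c \<noteq> b" using assms(2,3) mem dist by auto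
  have f1: "\<not> (chi u a b = chi u b c \<and> chi u b c = chi u c a)" using NI[of a b c] mem nu by simp
  have f2: "(chi u a b = 1 \<or> chi u a b = -1) \<and> chi a b u = chi u a b \<and> chi b u a = chi u a b \<and> chi b a u = - chi u a b \<and> chi a u b = - chi u a b \<and> chi u b a = - chi u a b" using SF[OF ch, of u a b] mem nu by simp
  have f3: "(chi u a c = 1 \<or> chi u a c = -1) \<and> chi a c u = chi u a c \<and> chi c u a = chi u a c \<and> chi c a u = - chi u a c \<and> chi a u c = - chi u a c \<and> chi u c a = - chi u a c" using SF[OF ch, of u a c] mem nu by simp
  have f4: "(chi u b c = 1 \<or> chi u b c = -1) \<and> chi b c u = chi u b c \<and> chi c u b = chi u b c \<and> chi c b u = - chi u b c \<and> chi b u c = - chi u b c \<and> chi u c b = - chi u b c" using SF[OF ch, of u b c] mem nu by simp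
  have f5: "(chi a b c = 1 \<or> chi a b c = -1) \<and> chi b c a = chi a b c \<and> chi c a b = chi a b c \<and> chi c b a = - chi a b c \<and> chi b a c = - chi a b c \<and> chi a c b = - chi a b c" using SF[OF ch, of a b c] mem nu by simp
  show ?thesis using nv f1 f2 f3 f4 f5 unfolding twist_def by (smt (z3))
qed

lemma twI4:
  assumes ch: "chirotope chi (insert u X)" and "u \<notin> X" and "v \<notin> X"
    and NI: "\<And>p q r. p \<in> X \<Longrightarrow> q \<in> X \<Longrightarrow> r \<in> X \<Longrightarrow> distinct [p,q,r] \<Longrightarrow> \<not> (chi u p q = chi u q r \<and> chi u q r = chi u r p)"
    and mem: "a \<in> X" "b \<in> X" "c \<in> X" and dist: "distinct [a,b,c]"
  shows "twist chi u v a c v = 1 \<longrightarrow> twist chi u v b a v = 1 \<longrightarrow> twist chi u v b c a = 1 \<longrightarrow> twist chi u v b c v = 1"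
proof -
  have nv: "a \<noteq> v \<and> b \<noteq> v \<and> c \<noteq> v" using assms(2,3) mem dist by auto
  have nu: "u \<noteq> a \<and> u \<noteq> b \<and> u \<noteq> c \<and> a \<noteq> u \<and> a \<noteq> b \<and> a \<noteq> c \<and> b \<noteq> u \<and> b \<noteq> a \<and> b \<noteq> c \<and> c \<noteq> u \<and> c \<noteq> a \<and> c \<noteq> b" using assms(2,3) mem dist by auto
  have f1: "\<not> (chi u a b = chi u b c \<and> chi u b c = chi u c a)" using NI[of a b c] mem nu by simp
  have f2: "(chi u a b = 1 \<or> chi u a b = -1) \<and> chi a b u = chi u a b \<and> chi b u a = chi u a b \<and> chi b a u = - chi u a b \<and> chi a u b = - chi u a b \<and> chi u b a = - chi u a b" using SF[OF ch, of u a b] mem nu by simp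
  have f3: "(chi u a c = 1 \<or> chi u a c = -1) \<and> chi a c u = chi u a c \<and> chi c u a = chi u a c \<and> chi c a u = - chi u a c \<and> chi a u c = - chi u a c \<and> chi u c a = - chi u a c" using SF[OF ch, of u a c] mem nu by simp
  have f4: "(chi u b c = 1 \<or> chi u b c = -1) \<and> chi b c u = chi u b c \<and> chi c u b = chi u b c \<and> chi c b u = - chi u b c \<and> chi b u c = - chi u b c \<and> chi u c b = - chi u b c" using SF[OF ch, of u b c] mem nu by simp
  have f5: "(chi a b c = 1 \<or> chi a b c = -1) \<and> chi b c a = chi a b c \<and> chi c a b = chi a b c \<and> chi c b a = - chi a b c \<and> chi b a c = - chi a b c \<and> chi a c b = - chi a b c" using SF[OF ch, of a b c] mem nu by simp
  show ?thesis using nv f1 f2 f3 f4 f5 unfolding twist_def by (smt (z3))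
qed

lemma twT1:
  assumes ch: "chirotope chi (insert u X)" and "u \<notin> X" and "v \<notin> X"
    and NI: "\<And>p q r. p \<in> X \<Longrightarrow> q \<in> X \<Longrightarrow> r \<in> X \<Longrightarrow> distinct [p,q,r] \<Longrightarrow> \<not> (chi u p q = chi u q r \<and> chi u q r = chi u r p)"
    and mem: "a \<in> X" "b \<in> X" "c \<in> X" "d \<in> X" and dist: "distinct [a,b,c,d]"
  shows "twist chi u v a v b = 1 \<longrightarrow> twist chi u v a v c = 1 \<longrightarrow> twist chi u v a v d = 1 \<longrightarrow> twist chi u v b c a = 1 \<longrightarrow> twist chi u v c d a = 1 \<longrightarrow> twist chi u v b d a = 1"
proof -
  have nv: "a \<noteq> v \<and> b \<noteq> v \<and> c \<noteq> v \<and> d \<noteq> v" using assms(2,3) mem dist by auto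
  have nu: "u \<noteq> a \<and> u \<noteq> b \<and> u \<noteq> c \<and> u \<noteq> d \<and> a \<noteq> u \<and> a \<noteq> b \<and> a \<noteq> c \<and> a \<noteq> d \<and> b \<noteq> u \<and> b \<noteq> a \<and> b \<noteq> c \<and> b \<noteq> d \<and> c \<noteq> u \<and> c \<noteq> a \<and> c \<noteq> b \<and> c \<noteq> d \<and> d \<noteq> u \<and> d \<noteq> a \<and> d \<noteq> b \<and> d \<noteq> c" using assms(2,3) mem dist by auto
  have f1: "chi a c d = 1 \<longrightarrow> chi b a d = 1 \<longrightarrow> chi b c a = 1 \<longrightarrow> chi b c d = 1" using CI[OF ch, of a b c d] mem nu by simp
  have f2: "chi d b u = 1 \<longrightarrow> chi d b a = 1 \<longrightarrow> chi d b c = 1 \<longrightarrow> chi u a d = 1 \<longrightarrow> chi a c d = 1 \<longrightarrow> chi u c d = 1" using CT[OF ch, of b d u a c] mem nu by simp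
  have f3: "chi b c u = 1 \<longrightarrow> chi b c a = 1 \<longrightarrow> chi b c d = 1 \<longrightarrow> chi u a b = 1 \<longrightarrow> chi a d b = 1 \<longrightarrow> chi u d b = 1" using CT[OF ch, of c b u a d] mem nu by simp
  have f4: "chi c d u = 1 \<longrightarrow> chi c d a = 1 \<longrightarrow> chi c d b = 1 \<longrightarrow> chi u a c = 1 \<longrightarrow> chi a b c = 1 \<longrightarrow> chi u b c = 1" using CT[OF ch, of d c u a b] mem nu by simp
  have f5: "\<not> (chi u b c = chi u c d \<and> chi u c d = chi u d b)" using NI[of b c d] mem nu by simp
  have f6: "(chi u a b = 1 \<or> chi u a b = -1) \<and> chi a b u = chi u a b \<and> chi b u a = chi u a b \<and> chi b a u = - chi u a b \<and> chi a u b = - chi u a b \<and> chi u b a = - chi u a b" using SF[OF ch, of u a b] mem nu by simp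
  have f7: "(chi u a c = 1 \<or> chi u a c = -1) \<and> chi a c u = chi u a c \<and> chi c u a = chi u a c \<and> chi c a u = - chi u a c \<and> chi a u c = - chi u a c \<and> chi u c a = - chi u a c" using SF[OF ch, of u a c] mem nu by simp
  have f8: "(chi u a d = 1 \<or> chi u a d = -1) \<and> chi a d u = chi u a d \<and> chi d u a = chi u a d \<and> chi d a u = - chi u a d \<and> chi a u d = - chi u a d \<and> chi u d a = - chi u a d" using SF[OF ch, of u a d] mem nu by simp
  have f9: "(chi u b c = 1 \<or> chi u b c = -1) \<and> chi b c u = chi u b c \<and> chi c u b = chi u b c \<and> chi c b u = - chi u b c \<and> chi b u c = - chi u b c \<and> chi u c b = - chi u b c" using SF[OF ch, of u b c] mem nu by simp
  have f10: "(chi u b d = 1 \<or> chi u b d = -1) \<and> chi b d u = chi u b d \<and> chi d u b = chi u b d \<and> chi d b u = - chi u b d \<and> chi b u d = - chi u b d \<and> chi u d b = - chi u b d" using SF[OF ch, of u b d] mem nu by simp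
  have f11: "(chi u c d = 1 \<or> chi u c d = -1) \<and> chi c d u = chi u c d \<and> chi d u c = chi u c d \<and> chi d c u = - chi u c d \<and> chi c u d = - chi u c d \<and> chi u d c = - chi u c d" using SF[OF ch, of u c d] mem nu by simp
  have f12: "(chi a b c = 1 \<or> chi a b c = -1) \<and> chi b c a = chi a b c \<and> chi c a b = chi a b c \<and> chi c b a = - chi a b c \<and> chi b a c = - chi a b c \<and> chi a c b = - chi a b c" using SF[OF ch, of a b c] mem nu by simp
  have f13: "(chi a b d = 1 \<or> chi a b d = -1) \<and> chi b d a = chi a b d \<and> chi d a b = chi a b d \<and> chi d b a = - chi a b d \<and> chi b a d = - chi a b d \<and> chi a d b = - chi a b d" using SF[OF ch, of a b d] mem nu by simp
  have f14: "(chi a c d = 1 \<or> chi a c d = -1) \<and> chi c d a = chi a c d \<and> chi d a c = chi a c d \<and> chi d c a = - chi a c d \<and> chi c a d = - chi a c d \<and> chi a d c = - chi a c d" using SF[OF ch, of a c d] mem nu by simp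
  have f15: "(chi b c d = 1 \<or> chi b c d = -1) \<and> chi c d b = chi b c d \<and> chi d b c = chi b c d \<and> chi d c b = - chi b c d \<and> chi c b d = - chi b c d \<and> chi b d c = - chi b c d" using SF[OF ch, of b c d] mem nu by simp
  show ?thesis using nv f1 f2 f3 f4 f5 f6 f7 f8 f9 f10 f11 f12 f13 f14 f15 unfolding twist_def by (smt (z3))
qed

lemma twT2:
  assumes ch: "chirotope chi (insert u X)" and "u \<notin> X" and "v \<notin> X"
    and NI: "\<And>p q r. p \<in> X \<Longrightarrow> q \<in> X \<Longrightarrow> r \<in> X \<Longrightarrow> distinct [p,q,r] \<Longrightarrow> \<not> (chi u p q = chi u q r \<and> chi u q r = chi u r p)"
    and mem: "a \<in> X" "b \<in> X" "c \<in> X" "d \<in> X" and dist: "distinct [a,b,c,d]"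
  shows "twist chi u v v a b = 1 \<longrightarrow> twist chi u v v a c = 1 \<longrightarrow> twist chi u v v a d = 1 \<longrightarrow> twist chi u v b c v = 1 \<longrightarrow> twist chi u v c d v = 1 \<longrightarrow> twist chi u v b d v = 1"
proof -
  have nv: "a \<noteq> v \<and> b \<noteq> v \<and> c \<noteq> v \<and> d \<noteq> v" using assms(2,3) mem dist by auto
  have nu: "u \<noteq> a \<and> u \<noteq> b \<and> u \<noteq> c \<and> u \<noteq> d \<and> a \<noteq> u \<and> a \<noteq> b \<and> a \<noteq> c \<and> a \<noteq> d \<and> b \<noteq> u \<and> b \<noteq> a \<and> b \<noteq> c \<and> b \<noteq> d \<and> c \<noteq> u \<and> c \<noteq> a \<and> c \<noteq> b \<and> c \<noteq> d \<and> d \<noteq> u \<and> d \<noteq> a \<and> d \<noteq> b \<and> d \<noteq> c" using assms(2,3) mem dist by auto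
  have f1: "\<not> (chi u b c = chi u c d \<and> chi u c d = chi u d b)" using NI[of b c d] mem nu by simp
  have f2: "(chi u a b = 1 \<or> chi u a b = -1) \<and> chi a b u = chi u a b \<and> chi b u a = chi u a b \<and> chi b a u = - chi u a b \<and> chi a u b = - chi u a b \<and> chi u b a = - chi u a b" using SF[OF ch, of u a b] mem nu by simp
  have f3: "(chi u a c = 1 \<or> chi u a c = -1) \<and> chi a c u = chi u a c \<and> chi c u a = chi u a c \<and> chi c a u = - chi u a c \<and> chi a u c = - chi u a c \<and> chi u c a = - chi u a c" using SF[OF ch, of u a c] mem nu by simp
  have f4: "(chi u a d = 1 \<or> chi u a d = -1) \<and> chi a d u = chi u a d \<and> chi d u a = chi u a d \<and> chi d a u = - chi u a d \<and> chi a u d = - chi u a d \<and> chi u d a = - chi u a d" using SF[OF ch, of u a d] mem nu by simp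
  have f5: "(chi u b c = 1 \<or> chi u b c = -1) \<and> chi b c u = chi u b c \<and> chi c u b = chi u b c \<and> chi c b u = - chi u b c \<and> chi b u c = - chi u b c \<and> chi u c b = - chi u b c" using SF[OF ch, of u b c] mem nu by simp
  have f6: "(chi u b d = 1 \<or> chi u b d = -1) \<and> chi b d u = chi u b d \<and> chi d u b = chi u b d \<and> chi d b u = - chi u b d \<and> chi b u d = - chi u b d \<and> chi u d b = - chi u b d" using SF[OF ch, of u b d] mem nu by simp
  have f7: "(chi u c d = 1 \<or> chi u c d = -1) \<and> chi c d u = chi u c d \<and> chi d u c = chi u c d \<and> chi d c u = - chi u c d \<and> chi c u d = - chi u c d \<and> chi u d c = - chi u c d" using SF[OF ch, of u c d] mem nu by simp
  have f8: "(chi a b c = 1 \<or> chi a b c = -1) \<and> chi b c a = chi a b c \<and> chi c a b = chi a b c \<and> chi c b a = - chi a b c \<and> chi b a c = - chi a b c \<and> chi a c b = - chi a b c" using SF[OF ch, of a b c] mem nu by simp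
  have f9: "(chi a b d = 1 \<or> chi a b d = -1) \<and> chi b d a = chi a b d \<and> chi d a b = chi a b d \<and> chi d b a = - chi a b d \<and> chi b a d = - chi a b d \<and> chi a d b = - chi a b d" using SF[OF ch, of a b d] mem nu by simp
  have f10: "(chi a c d = 1 \<or> chi a c d = -1) \<and> chi c d a = chi a c d \<and> chi d a c = chi a c d \<and> chi d c a = - chi a c d \<and> chi c a d = - chi a c d \<and> chi a d c = - chi a c d" using SF[OF ch, of a c d] mem nu by simp
  have f11: "(chi b c d = 1 \<or> chi b c d = -1) \<and> chi c d b = chi b c d \<and> chi d b c = chi b c d \<and> chi d c b = - chi b c d \<and> chi c b d = - chi b c d \<and> chi b d c = - chi b c d" using SF[OF ch, of b c d] mem nu by simp
  show ?thesis using nv f1 f2 f3 f4 f5 f6 f7 f8 f9 f10 f11 unfolding twist_def by (smt (z3))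
qed

lemma twT3:
  assumes ch: "chirotope chi (insert u X)" and "u \<notin> X" and "v \<notin> X"
    and NI: "\<And>p q r. p \<in> X \<Longrightarrow> q \<in> X \<Longrightarrow> r \<in> X \<Longrightarrow> distinct [p,q,r] \<Longrightarrow> \<not> (chi u p q = chi u q r \<and> chi u q r = chi u r p)"
    and mem: "a \<in> X" "b \<in> X" "c \<in> X" "d \<in> X" and dist: "distinct [a,b,c,d]"
  shows "twist chi u v b a v = 1 \<longrightarrow> twist chi u v b a c = 1 \<longrightarrow> twist chi u v b a d = 1 \<longrightarrow> twist chi u v v c b = 1 \<longrightarrow> twist chi u v c d b = 1 \<longrightarrow> twist chi u v v d b = 1"
proof -
  have nv: "a \<noteq> v \<and> b \<noteq> v \<and> c \<noteq> v \<and> d \<noteq> v" using assms(2,3) mem dist by auto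
  have nu: "u \<noteq> a \<and> u \<noteq> b \<and> u \<noteq> c \<and> u \<noteq> d \<and> a \<noteq> u \<and> a \<noteq> b \<and> a \<noteq> c \<and> a \<noteq> d \<and> b \<noteq> u \<and> b \<noteq> a \<and> b \<noteq> c \<and> b \<noteq> d \<and> c \<noteq> u \<and> c \<noteq> a \<and> c \<noteq> b \<and> c \<noteq> d \<and> d \<noteq> u \<and> d \<noteq> a \<and> d \<noteq> b \<and> d \<noteq> c" using assms(2,3) mem dist by auto
  have f1: "chi u b c = 1 \<longrightarrow> chi a u c = 1 \<longrightarrow> chi a b u = 1 \<longrightarrow> chi a b c = 1" using CI[OF ch, of u a b c] mem nu by simp
  have f2: "chi c u a = 1 \<longrightarrow> chi c u d = 1 \<longrightarrow> chi c u b = 1 \<longrightarrow> chi a d c = 1 \<longrightarrow> chi d b c = 1 \<longrightarrow> chi a b c = 1" using CT[OF ch, of u c a d b] mem nu by simp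
  have f3: "chi d b u = 1 \<longrightarrow> chi d b a = 1 \<longrightarrow> chi d b c = 1 \<longrightarrow> chi u a d = 1 \<longrightarrow> chi a c d = 1 \<longrightarrow> chi u c d = 1" using CT[OF ch, of b d u a c] mem nu by simp
  have f4: "chi a c u = 1 \<longrightarrow> chi a c d = 1 \<longrightarrow> chi a c b = 1 \<longrightarrow> chi u d a = 1 \<longrightarrow> chi d b a = 1 \<longrightarrow> chi u b a = 1" using CT[OF ch, of c a u d b] mem nu by simp
  have f5: "\<not> (chi u b c = chi u c d \<and> chi u c d = chi u d b)" using NI[of b c d] mem nu by simp
  have f6: "(chi u a b = 1 \<or> chi u a b = -1) \<and> chi a b u = chi u a b \<and> chi b u a = chi u a b \<and> chi b a u = - chi u a b \<and> chi a u b = - chi u a b \<and> chi u b a = - chi u a b" using SF[OF ch, of u a b] mem nu by simp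
  have f7: "(chi u a c = 1 \<or> chi u a c = -1) \<and> chi a c u = chi u a c \<and> chi c u a = chi u a c \<and> chi c a u = - chi u a c \<and> chi a u c = - chi u a c \<and> chi u c a = - chi u a c" using SF[OF ch, of u a c] mem nu by simp
  have f8: "(chi u a d = 1 \<or> chi u a d = -1) \<and> chi a d u = chi u a d \<and> chi d u a = chi u a d \<and> chi d a u = - chi u a d \<and> chi a u d = - chi u a d \<and> chi u d a = - chi u a d" using SF[OF ch, of u a d] mem nu by simp
  have f9: "(chi u b c = 1 \<or> chi u b c = -1) \<and> chi b c u = chi u b c \<and> chi c u b = chi u b c \<and> chi c b u = - chi u b c \<and> chi b u c = - chi u b c \<and> chi u c b = - chi u b c" using SF[OF ch, of u b c] mem nu by simp
  have f10: "(chi u b d = 1 \<or> chi u b d = -1) \<and> chi b d u = chi u b d \<and> chi d u b = chi u b d \<and> chi d b u = - chi u b d \<and> chi b u d = - chi u b d \<and> chi u d b = - chi u b d" using SF[OF ch, of u b d] mem nu by simp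
  have f11: "(chi u c d = 1 \<or> chi u c d = -1) \<and> chi c d u = chi u c d \<and> chi d u c = chi u c d \<and> chi d c u = - chi u c d \<and> chi c u d = - chi u c d \<and> chi u d c = - chi u c d" using SF[OF ch, of u c d] mem nu by simp
  have f12: "(chi a b c = 1 \<or> chi a b c = -1) \<and> chi b c a = chi a b c \<and> chi c a b = chi a b c \<and> chi c b a = - chi a b c \<and> chi b a c = - chi a b c \<and> chi a c b = - chi a b c" using SF[OF ch, of a b c] mem nu by simp
  have f13: "(chi a b d = 1 \<or> chi a b d = -1) \<and> chi b d a = chi a b d \<and> chi d a b = chi a b d \<and> chi d b a = - chi a b d \<and> chi b a d = - chi a b d \<and> chi a d b = - chi a b d" using SF[OF ch, of a b d] mem nu by simp
  have f14: "(chi a c d = 1 \<or> chi a c d = -1) \<and> chi c d a = chi a c d \<and> chi d a c = chi a c d \<and> chi d c a = - chi a c d \<and> chi c a d = - chi a c d \<and> chi a d c = - chi a c d" using SF[OF ch, of a c d] mem nu by simp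
  have f15: "(chi b c d = 1 \<or> chi b c d = -1) \<and> chi c d b = chi b c d \<and> chi d b c = chi b c d \<and> chi d c b = - chi b c d \<and> chi c b d = - chi b c d \<and> chi b d c = - chi b c d" using SF[OF ch, of b c d] mem nu by simp
  show ?thesis using nv f1 f2 f3 f4 f5 f6 f7 f8 f9 f10 f11 f12 f13 f14 f15 unfolding twist_def by (smt (z3))
qed

lemma twT4:
  assumes ch: "chirotope chi (insert u X)" and "u \<notin> X" and "v \<notin> X"
    and NI: "\<And>p q r. p \<in> X \<Longrightarrow> q \<in> X \<Longrightarrow> r \<in> X \<Longrightarrow> distinct [p,q,r] \<Longrightarrow> \<not> (chi u p q = chi u q r \<and> chi u q r = chi u r p)"
    and mem: "a \<in> X" "b \<in> X" "c \<in> X" "d \<in> X" and dist: "distinct [a,b,c,d]"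
  shows "twist chi u v b a c = 1 \<longrightarrow> twist chi u v b a v = 1 \<longrightarrow> twist chi u v b a d = 1 \<longrightarrow> twist chi u v c v b = 1 \<longrightarrow> twist chi u v v d b = 1 \<longrightarrow> twist chi u v c d b = 1"
proof -
  have nv: "a \<noteq> v \<and> b \<noteq> v \<and> c \<noteq> v \<and> d \<noteq> v" using assms(2,3) mem dist by auto
  have nu: "u \<noteq> a \<and> u \<noteq> b \<and> u \<noteq> c \<and> u \<noteq> d \<and> a \<noteq> u \<and> a \<noteq> b \<and> a \<noteq> c \<and> a \<noteq> d \<and> b \<noteq> u \<and> b \<noteq> a \<and> b \<noteq> c \<and> b \<noteq> d \<and> c \<noteq> u \<and> c \<noteq> a \<and> c \<noteq> b \<and> c \<noteq> d \<and> d \<noteq> u \<and> d \<noteq> a \<and> d \<noteq> b \<and> d \<noteq> c" using assms(2,3) mem dist by auto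
  have f1: "chi u b d = 1 \<longrightarrow> chi a u d = 1 \<longrightarrow> chi a b u = 1 \<longrightarrow> chi a b d = 1" using CI[OF ch, of u a b d] mem nu by simp
  have f2: "chi d u a = 1 \<longrightarrow> chi d u c = 1 \<longrightarrow> chi d u b = 1 \<longrightarrow> chi a c d = 1 \<longrightarrow> chi c b d = 1 \<longrightarrow> chi a b d = 1" using CT[OF ch, of u d a c b] mem nu by simp
  have f3: "chi c b u = 1 \<longrightarrow> chi c b a = 1 \<longrightarrow> chi c b d = 1 \<longrightarrow> chi u a c = 1 \<longrightarrow> chi a d c = 1 \<longrightarrow> chi u d c = 1" using CT[OF ch, of b c u a d] mem nu by simp
  have f4: "chi a d u = 1 \<longrightarrow> chi a d c = 1 \<longrightarrow> chi a d b = 1 \<longrightarrow> chi u c a = 1 \<longrightarrow> chi c b a = 1 \<longrightarrow> chi u b a = 1" using CT[OF ch, of d a u c b] mem nu by simp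
  have f5: "\<not> (chi u b c = chi u c d \<and> chi u c d = chi u d b)" using NI[of b c d] mem nu by simp
  have f6: "(chi u a b = 1 \<or> chi u a b = -1) \<and> chi a b u = chi u a b \<and> chi b u a = chi u a b \<and> chi b a u = - chi u a b \<and> chi a u b = - chi u a b \<and> chi u b a = - chi u a b" using SF[OF ch, of u a b] mem nu by simp
  have f7: "(chi u a c = 1 \<or> chi u a c = -1) \<and> chi a c u = chi u a c \<and> chi c u a = chi u a c \<and> chi c a u = - chi u a c \<and> chi a u c = - chi u a c \<and> chi u c a = - chi u a c" using SF[OF ch, of u a c] mem nu by simp
  have f8: "(chi u a d = 1 \<or> chi u a d = -1) \<and> chi a d u = chi u a d \<and> chi d u a = chi u a d \<and> chi d a u = - chi u a d \<and> chi a u d = - chi u a d \<and> chi u d a = - chi u a d" using SF[OF ch, of u a d] mem nu by simp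
  have f9: "(chi u b c = 1 \<or> chi u b c = -1) \<and> chi b c u = chi u b c \<and> chi c u b = chi u b c \<and> chi c b u = - chi u b c \<and> chi b u c = - chi u b c \<and> chi u c b = - chi u b c" using SF[OF ch, of u b c] mem nu by simp
  have f10: "(chi u b d = 1 \<or> chi u b d = -1) \<and> chi b d u = chi u b d \<and> chi d u b = chi u b d \<and> chi d b u = - chi u b d \<and> chi b u d = - chi u b d \<and> chi u d b = - chi u b d" using SF[OF ch, of u b d] mem nu by simp
  have f11: "(chi u c d = 1 \<or> chi u c d = -1) \<and> chi c d u = chi u c d \<and> chi d u c = chi u c d \<and> chi d c u = - chi u c d \<and> chi c u d = - chi u c d \<and> chi u d c = - chi u c d" using SF[OF ch, of u c d] mem nu by simp
  have f12: "(chi a b c = 1 \<or> chi a b c = -1) \<and> chi b c a = chi a b c \<and> chi c a b = chi a b c \<and> chi c b a = - chi a b c \<and> chi b a c = - chi a b c \<and> chi a c b = - chi a b c" using SF[OF ch, of a b c] mem nu by simp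
  have f13: "(chi a b d = 1 \<or> chi a b d = -1) \<and> chi b d a = chi a b d \<and> chi d a b = chi a b d \<and> chi d b a = - chi a b d \<and> chi b a d = - chi a b d \<and> chi a d b = - chi a b d" using SF[OF ch, of a b d] mem nu by simp
  have f14: "(chi a c d = 1 \<or> chi a c d = -1) \<and> chi c d a = chi a c d \<and> chi d a c = chi a c d \<and> chi d c a = - chi a c d \<and> chi c a d = - chi a c d \<and> chi a d c = - chi a c d" using SF[OF ch, of a c d] mem nu by simp
  have f15: "(chi b c d = 1 \<or> chi b c d = -1) \<and> chi c d b = chi b c d \<and> chi d b c = chi b c d \<and> chi d c b = - chi b c d \<and> chi c b d = - chi b c d \<and> chi b d c = - chi b c d" using SF[OF ch, of b c d] mem nu by simp
  show ?thesis using nv f1 f2 f3 f4 f5 f6 f7 f8 f9 f10 f11 f12 f13 f14 f15 unfolding twist_def by (smt (z3))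
qed

lemma twT5:
  assumes ch: "chirotope chi (insert u X)" and "u \<notin> X" and "v \<notin> X"
    and NI: "\<And>p q r. p \<in> X \<Longrightarrow> q \<in> X \<Longrightarrow> r \<in> X \<Longrightarrow> distinct [p,q,r] \<Longrightarrow> \<not> (chi u p q = chi u q r \<and> chi u q r = chi u r p)"
    and mem: "a \<in> X" "b \<in> X" "c \<in> X" "d \<in> X" and dist: "distinct [a,b,c,d]"
  shows "twist chi u v b a c = 1 \<longrightarrow> twist chi u v b a d = 1 \<longrightarrow> twist chi u v b a v = 1 \<longrightarrow> twist chi u v c d b = 1 \<longrightarrow> twist chi u v d v b = 1 \<longrightarrow> twist chi u v c v b = 1"
proof -
  have nv: "a \<noteq> v \<and> b \<noteq> v \<and> c \<noteq> v \<and> d \<noteq> v" using assms(2,3) mem dist by auto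
  have nu: "u \<noteq> a \<and> u \<noteq> b \<and> u \<noteq> c \<and> u \<noteq> d \<and> a \<noteq> u \<and> a \<noteq> b \<and> a \<noteq> c \<and> a \<noteq> d \<and> b \<noteq> u \<and> b \<noteq> a \<and> b \<noteq> c \<and> b \<noteq> d \<and> c \<noteq> u \<and> c \<noteq> a \<and> c \<noteq> b \<and> c \<noteq> d \<and> d \<noteq> u \<and> d \<noteq> a \<and> d \<noteq> b \<and> d \<noteq> c" using assms(2,3) mem dist by auto
  have f1: "chi u b c = 1 \<longrightarrow> chi a u c = 1 \<longrightarrow> chi a b u = 1 \<longrightarrow> chi a b c = 1" using CI[OF ch, of u a b c] mem nu by simp
  have f2: "chi c u a = 1 \<longrightarrow> chi c u d = 1 \<longrightarrow> chi c u b = 1 \<longrightarrow> chi a d c = 1 \<longrightarrow> chi d b c = 1 \<longrightarrow> chi a b c = 1" using CT[OF ch, of u c a d b] mem nu by simp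
  have f3: "chi d b u = 1 \<longrightarrow> chi d b a = 1 \<longrightarrow> chi d b c = 1 \<longrightarrow> chi u a d = 1 \<longrightarrow> chi a c d = 1 \<longrightarrow> chi u c d = 1" using CT[OF ch, of b d u a c] mem nu by simp
  have f4: "chi a c u = 1 \<longrightarrow> chi a c d = 1 \<longrightarrow> chi a c b = 1 \<longrightarrow> chi u d a = 1 \<longrightarrow> chi d b a = 1 \<longrightarrow> chi u b a = 1" using CT[OF ch, of c a u d b] mem nu by simp
  have f5: "\<not> (chi u b c = chi u c d \<and> chi u c d = chi u d b)" using NI[of b c d] mem nu by simp
  have f6: "(chi u a b = 1 \<or> chi u a b = -1) \<and> chi a b u = chi u a b \<and> chi b u a = chi u a b \<and> chi b a u = - chi u a b \<and> chi a u b = - chi u a b \<and> chi u b a = - chi u a b" using SF[OF ch, of u a b] mem nu by simp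
  have f7: "(chi u a c = 1 \<or> chi u a c = -1) \<and> chi a c u = chi u a c \<and> chi c u a = chi u a c \<and> chi c a u = - chi u a c \<and> chi a u c = - chi u a c \<and> chi u c a = - chi u a c" using SF[OF ch, of u a c] mem nu by simp
  have f8: "(chi u a d = 1 \<or> chi u a d = -1) \<and> chi a d u = chi u a d \<and> chi d u a = chi u a d \<and> chi d a u = - chi u a d \<and> chi a u d = - chi u a d \<and> chi u d a = - chi u a d" using SF[OF ch, of u a d] mem nu by simp
  have f9: "(chi u b c = 1 \<or> chi u b c = -1) \<and> chi b c u = chi u b c \<and> chi c u b = chi u b c \<and> chi c b u = - chi u b c \<and> chi b u c = - chi u b c \<and> chi u c b = - chi u b c" using SF[OF ch, of u b c] mem nu by simp
  have f10: "(chi u b d = 1 \<or> chi u b d = -1) \<and> chi b d u = chi u b d \<and> chi d u b = chi u b d \<and> chi d b u = - chi u b d \<and> chi b u d = - chi u b d \<and> chi u d b = - chi u b d" using SF[OF ch, of u b d] mem nu by simp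
  have f11: "(chi u c d = 1 \<or> chi u c d = -1) \<and> chi c d u = chi u c d \<and> chi d u c = chi u c d \<and> chi d c u = - chi u c d \<and> chi c u d = - chi u c d \<and> chi u d c = - chi u c d" using SF[OF ch, of u c d] mem nu by simp
  have f12: "(chi a b c = 1 \<or> chi a b c = -1) \<and> chi b c a = chi a b c \<and> chi c a b = chi a b c \<and> chi c b a = - chi a b c \<and> chi b a c = - chi a b c \<and> chi a c b = - chi a b c" using SF[OF ch, of a b c] mem nu by simp
  have f13: "(chi a b d = 1 \<or> chi a b d = -1) \<and> chi b d a = chi a b d \<and> chi d a b = chi a b d \<and> chi d b a = - chi a b d \<and> chi b a d = - chi a b d \<and> chi a d b = - chi a b d" using SF[OF ch, of a b d] mem nu by simp
  have f14: "(chi a c d = 1 \<or> chi a c d = -1) \<and> chi c d a = chi a c d \<and> chi d a c = chi a c d \<and> chi d c a = - chi a c d \<and> chi c a d = - chi a c d \<and> chi a d c = - chi a c d" using SF[OF ch, of a c d] mem nu by simp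
  have f15: "(chi b c d = 1 \<or> chi b c d = -1) \<and> chi c d b = chi b c d \<and> chi d b c = chi b c d \<and> chi d c b = - chi b c d \<and> chi c b d = - chi b c d \<and> chi b d c = - chi b c d" using SF[OF ch, of b c d] mem nu by simp
  show ?thesis using nv f1 f2 f3 f4 f5 f6 f7 f8 f9 f10 f11 f12 f13 f14 f15 unfolding twist_def by (smt (z3))
qed
lemma twSF:
  assumes ch: "chirotope chi (insert u X)" and "u \<notin> X" and "v \<notin> X"
    and fin: "finite X"
  shows "sign_function (twist chi u v) (insert v X)"
  unfolding sign_function_def
proof (intro conjI ballI impI)
  show "finite (insert v X)" using fin by simp
next
  fix x y z assume m: "x \<in> insert v X" "y \<in> insert v X" "z \<in> insert v X" and d: "distinct [x,y,z]"
  let ?p = "twist chi u v"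
  have "?p x y z \<in> {-1, 1} \<and> ?p x y z = ?p y z x \<and> ?p x y z = ?p z x y \<and>
        ?p x y z = - ?p z y x \<and> ?p x y z = - ?p y x z \<and> ?p x y z = - ?p x z y"
  proof (cases "x = v \<or> y = v \<or> z = v")
    case True
    then show ?thesis
    proof (elim disjE)
      assume xv: "x = v"
      then have "y \<in> X" "z \<in> X" using m d by auto
      then have "y \<in> insert u X" "z \<in> insert u X" "u \<in> insert u X" "distinct [y,z,u]" using d assms(2) by auto
      from SF[OF ch this] show ?thesis using xv d assms(2,3) \<open>y \<in> X\<close> \<open>z \<in> X\<close> unfolding twist_def by auto
    next
      assume yv: "y = v"
      then have "x \<in> X" "z \<in> X" using m d by auto
      then have "z \<in> insert u X" "x \<in> insert u X" "u \<in> insert u X" "distinct [z,x,u]" using d assms(2) by auto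
      from SF[OF ch this] show ?thesis using yv d assms(2,3) \<open>x \<in> X\<close> \<open>z \<in> X\<close> unfolding twist_def by auto
    next
      assume zv: "z = v"
      then have "x \<in> X" "y \<in> X" using m d by auto
      then have "x \<in> insert u X" "y \<in> insert u X" "u \<in> insert u X" "distinct [x,y,u]" using d assms(2) by auto
      from SF[OF ch this] show ?thesis using zv d assms(2,3) \<open>x \<in> X\<close> \<open>y \<in> X\<close> unfolding twist_def by auto
    qed
  next
    case False
    then have "x \<in> X" "y \<in> X" "z \<in> X" using m by auto
    then show ?thesis using SF[OF ch, of x y z] False d assms unfolding twist_def by auto
  qed
  then show "?p x y z \<in> {-1, 1}" "?p x y z = ?p y z x" "?p x y z = ?p z x y"
        "?p x y z = - ?p z y x" "?p x y z = - ?p y x z" "?p x y z = - ?p x z y" by auto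
qed

lemma twCh:
  assumes "u \<notin> X" and "v \<notin> X" and rc: "rooted_chirotope chi (insert u X) u"
  shows "chirotope (twist chi u v) (insert v X)"
proof -
  have ch: "chirotope chi (insert u X)" and ex: "extreme chi (insert u X) u"
    using rc unfolding rooted_chirotope_def by auto
  have fin: "finite X" using ch unfolding chirotope_def sign_function_def by auto
  have NI: "\<And>p q r. p \<in> X \<Longrightarrow> q \<in> X \<Longrightarrow> r \<in> X \<Longrightarrow> distinct [p,q,r] \<Longrightarrow> \<not> (chi u p q = chi u q r \<and> chi u q r = chi u r p)"
    using NI_all[OF ch assms(1) ex] by blast
  note A = ch assms(1,2) NI
  let ?p = "twist chi u v"
  have I: "\<forall>t\<in>insert v X. \<forall>x\<in>insert v X. \<forall>y\<in>insert v X. \<forall>z\<in>insert v X. distinct [t,x,y,z] \<longrightarrow>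
        ?p t y z = 1 \<longrightarrow> ?p x t z = 1 \<longrightarrow> ?p x y t = 1 \<longrightarrow> ?p x y z = 1"
  proof (intro ballI impI)
    fix t x y z assume m: "t \<in> insert v X" "x \<in> insert v X" "y \<in> insert v X" "z \<in> insert v X"
      and d: "distinct [t,x,y,z]" and h: "?p t y z = 1" "?p x t z = 1" "?p x y t = 1"
    consider "t = v" | "x = v" | "y = v" | "z = v" | "t \<noteq> v \<and> x \<noteq> v \<and> y \<noteq> v \<and> z \<noteq> v" by blast
    then show "?p x y z = 1"
    proof cases
      case 1 then show ?thesis using twI1[OF A, of x y z] m d h by auto
    next
      case 2 then show ?thesis using twI2[OF A, of t y z] m d h by auto
    next
      case 3 then show ?thesis using twI3[OF A, of t x z] m d h by auto
    next
      case 4 then show ?thesis using twI4[OF A, of t x y] m d h by auto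
    next
      case 5
      then have "t \<in> X" "x \<in> X" "y \<in> X" "z \<in> X" using m by auto
      then show ?thesis using CI[OF ch, of t x y z] 5 m d h unfolding twist_def by auto
    qed
  qed
  have T: "\<forall>s\<in>insert v X. \<forall>t\<in>insert v X. \<forall>x\<in>insert v X. \<forall>y\<in>insert v X. \<forall>z\<in>insert v X. distinct [s,t,x,y,z] \<longrightarrow>
        ?p t s x = 1 \<longrightarrow> ?p t s y = 1 \<longrightarrow> ?p t s z = 1 \<longrightarrow>
        ?p x y t = 1 \<longrightarrow> ?p y z t = 1 \<longrightarrow> ?p x z t = 1"
  proof (intro ballI impI)
    fix s t x y z assume m: "s \<in> insert v X" "t \<in> insert v X" "x \<in> insert v X" "y \<in> insert v X" "z \<in> insert v X"
      and d: "distinct [s,t,x,y,z]" and h: "?p t s x = 1" "?p t s y = 1" "?p t s z = 1"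
        "?p x y t = 1" "?p y z t = 1"
    consider "s = v" | "t = v" | "x = v" | "y = v" | "z = v" | "s \<noteq> v \<and> t \<noteq> v \<and> x \<noteq> v \<and> y \<noteq> v \<and> z \<noteq> v" by blast
    then show "?p x z t = 1"
    proof cases
      case 1 then show ?thesis using twT1[OF A, of t x y z] m d h by auto
    next
      case 2 then show ?thesis using twT2[OF A, of s x y z] m d h by auto
    next
      case 3 then show ?thesis using twT3[OF A, of s t y z] m d h by auto
    next
      case 4 then show ?thesis using twT4[OF A, of s t x z] m d h by auto
    next
      case 5 then show ?thesis using twT5[OF A, of s t x y] m d h by auto
    next
      case 6
      then have "s \<in> X" "t \<in> X" "x \<in> X" "y \<in> X" "z \<in> X" using m by auto
      then show ?thesis using CT[OF ch, of s t x y z] 6 m d h unfolding twist_def by auto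
    qed
  qed
  show ?thesis unfolding chirotope_def using twSF[OF ch assms(1,2) fin] I T by blast
qed

definition lamf :: "real \<Rightarrow> real \<Rightarrow> real \<Rightarrow> real \<times> real \<Rightarrow> real" where
  "lamf a b g p = a * fst p + b * snd p + g"

definition projf :: "real \<Rightarrow> real \<Rightarrow> real \<Rightarrow> real \<times> real \<Rightarrow> real \<times> real" where
  "projf a b g p = ((- b * fst p + a * snd p) / lamf a b g p, 1 / lamf a b g p)"
lemma alg1:
  fixes Np Nq Nr ip iq ir :: real
  shows "orient (Np*ip, ip) (Nq*iq, iq) (Nr*ir, ir) = iq*ir*(Nq-Nr) + ip*iq*(Np-Nq) + ip*ir*(Nr-Np)"
  unfolding orient_def by (simp add: algebra_simps)
lemma alg2:
  fixes a b g p1 p2 q1 q2 r1 r2 :: real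
  shows "(a*p1+b*p2+g)*((-b*q1+a*q2)-(-b*r1+a*r2)) + (a*q1+b*q2+g)*((-b*r1+a*r2)-(-b*p1+a*p2)) + (a*r1+b*r2+g)*((-b*p1+a*p2)-(-b*q1+a*q2))
     = (a^2+b^2) * ((q1-p1)*(r2-p2) - (q2-p2)*(r1-p1))"
  by (simp add: algebra_simps power2_eq_square)
lemma alg3:
  fixes Np Nq Nr ip iq ir Lp Lq Lr :: real
  assumes "Lp*ip=1" "Lq*iq=1" "Lr*ir=1"
  shows "iq*ir*(Nq-Nr) + ip*iq*(Np-Nq) + ip*ir*(Nr-Np) = ip*iq*ir*(Lp*(Nq-Nr)+Lq*(Nr-Np)+Lr*(Np-Nq))"
proof -
  have "ip*iq*ir*(Lp*(Nq-Nr)+Lq*(Nr-Np)+Lr*(Np-Nq)) = (Lp*ip)*iq*ir*(Nq-Nr) + (Lq*iq)*ip*ir*(Nr-Np) + (Lr*ir)*ip*iq*(Np-Nq)"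
    by (simp add: algebra_simps)
  then show ?thesis using assms by (simp add: algebra_simps)
qed
lemma orient_projf:
  assumes "lamf a b g p \<noteq> 0" "lamf a b g q \<noteq> 0" "lamf a b g r \<noteq> 0"
  shows "orient (projf a b g p) (projf a b g q) (projf a b g r) =
    (a^2 + b^2) * orient p q r / (lamf a b g p * lamf a b g q * lamf a b g r)"
proof -
  define Lp Lq Lr where "Lp = lamf a b g p" "Lq = lamf a b g q" "Lr = lamf a b g r"
  define Np Nq Nr where "Np = - b * fst p + a * snd p" "Nq = - b * fst q + a * snd q" "Nr = - b * fst r + a * snd r"
  have pr: "projf a b g p = (Np * inverse Lp, inverse Lp)" "projf a b g q = (Nq * inverse Lq, inverse Lq)" "projf a b g r = (Nr * inverse Lr, inverse Lr)"
    unfolding projf_def Lp_Lq_Lr_def Np_Nq_Nr_def by (simp_all add: divide_inverse)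
  have inv: "Lp * inverse Lp = 1" "Lq * inverse Lq = 1" "Lr * inverse Lr = 1"
    using assms unfolding Lp_Lq_Lr_def by auto
  have "Lp*(Nq-Nr)+Lq*(Nr-Np)+Lr*(Np-Nq) = (a^2 + b^2) * orient p q r"
    unfolding Lp_Lq_Lr_def Np_Nq_Nr_def lamf_def orient_def
    using alg2[of a "fst p" b "snd p" g "fst q" "snd q" "fst r" "snd r"] by simp
  then have "orient (projf a b g p) (projf a b g q) (projf a b g r) = inverse Lp * inverse Lq * inverse Lr * ((a^2 + b^2) * orient p q r)"
    unfolding pr alg1 alg3[OF inv] by simp
  also have "\<dots> = (a^2 + b^2) * orient p q r / (Lp * Lq * Lr)"
    by (simp add: divide_inverse inverse_mult_distrib algebra_simps)
  finally show ?thesis unfolding Lp_Lq_Lr_def .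
qed

lemma sign_aux:
  fixes K w L :: real
  assumes "K > 0" "w \<noteq> 0" "L \<noteq> 0" "x = K * w / L"
  shows "x \<noteq> 0 \<and> (x > 0 \<longleftrightarrow> (w > 0 \<longleftrightarrow> L > 0))"
proof -
  have "x \<noteq> 0" using assms by simp
  moreover have "(x > 0 \<longleftrightarrow> (w > 0 \<longleftrightarrow> L > 0))"
    using assms by (auto simp: zero_less_divide_iff zero_less_mult_iff mult_less_0_iff)
  ultimately show ?thesis by blast
qed

lemma small_eps:
  fixes g h :: "'a \<Rightarrow> real"
  assumes "finite S" "\<forall>z\<in>S. g z > 0"
  shows "\<exists>e>0. \<forall>z\<in>S. e * \<bar>h z\<bar> < g z"
  using assms
proof (induction S rule: finite_induct)
  case empty then show ?case by (intro exI[of _ 1]) auto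
next
  case (insert z S)
  then obtain e where e: "e > 0" "\<forall>y\<in>S. e * \<bar>h y\<bar> < g y" by auto
  define e' where "e' = min e (g z / (\<bar>h z\<bar> + 1))"
  have gz: "g z > 0" using insert by auto
  have "e' > 0" using e gz unfolding e'_def by auto
  moreover have "\<forall>y\<in>S. e' * \<bar>h y\<bar> < g y"
  proof
    fix y assume "y \<in> S"
    have "e' * \<bar>h y\<bar> \<le> e * \<bar>h y\<bar>" unfolding e'_def by (intro mult_right_mono) auto
    then show "e' * \<bar>h y\<bar> < g y" using e \<open>y \<in> S\<close> by fastforce
  qed
  moreover have "e' * \<bar>h z\<bar> < g z"
  proof -
    have "e' * \<bar>h z\<bar> \<le> g z / (\<bar>h z\<bar> + 1) * \<bar>h z\<bar>" unfolding e'_def by (intro mult_right_mono) auto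
    also have "\<dots> < g z" using gz by (simp add: field_simps)
    finally show ?thesis .
  qed
  ultimately show ?case by auto
qed

lemma twReal:
  assumes "u \<notin> X" and "v \<notin> X" and rc: "rooted_chirotope chi (insert u X) u"
    and re: "realizable chi (insert u X)"
  shows "realizable (twist chi u v) (insert v X)"
proof -
  have ch: "chirotope chi (insert u X)" and ex: "extreme chi (insert u X) u"
    using rc unfolding rooted_chirotope_def by auto
  obtain P where P: "\<And>x y z. x \<in> insert u X \<Longrightarrow> y \<in> insert u X \<Longrightarrow> z \<in> insert u X \<Longrightarrow> distinct [x,y,z] \<Longrightarrow>
        orient (P x) (P y) (P z) \<noteq> 0 \<and> (chi x y z = 1 \<longleftrightarrow> orient (P x) (P y) (P z) > 0)"
    using re unfolding realizable_def by blast
  obtain w where w: "w \<in> X" and wc: "\<forall>z\<in>insert u X - {u, w}. \<forall>z'\<in>insert u X - {u, w}. chi u w z = chi u w z'"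
    using ex assms unfolding extreme_def by auto
  have fin: "finite X" using ch unfolding chirotope_def sign_function_def by auto
  show ?thesis
  proof (cases "X - {w} = {}")
    case True
    then show ?thesis unfolding realizable_def by (intro exI[of _ P]) auto
  next
    case False
    then obtain z0 where z0: "z0 \<in> X" "z0 \<noteq> w" by auto
    have uw: "u \<noteq> w" "u \<noteq> z0" using w z0 assms(1) by auto
    define c where "c = chi u w z0"
    have cz: "chi u w z = c" if "z \<in> X" "z \<noteq> w" for z
    proof -
      have "z \<in> insert u X - {u,w}" "z0 \<in> insert u X - {u,w}" using that z0 uw assms(1) by auto
      then show ?thesis using wc unfolding c_def by blast
    qed
    define g where "g p = c * orient (P u) (P w) p" for p
    have gpos: "g (P z) > 0" if "z \<in> X" "z \<noteq> w" for z
    proof -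
      have "distinct [u,w,z]" using that uw assms(1) by auto
      then have o: "orient (P u) (P w) (P z) \<noteq> 0 \<and> (chi u w z = 1 \<longleftrightarrow> orient (P u) (P w) (P z) > 0)"
        using P[of u w z] that w by auto
      have "chi u w z = 1 \<or> chi u w z = -1" using SF[OF ch, of u w z] \<open>distinct [u,w,z]\<close> that w by auto
      then show ?thesis using o cz[OF that] unfolding g_def by auto
    qed
    define d1 where "d1 = fst (P w) - fst (P u)"
    define d2 where "d2 = snd (P w) - snd (P u)"
    define D where "D = d1^2 + d2^2"
    have "orient (P u) (P w) (P z0) \<noteq> 0" using P[of u w z0] uw z0 w by auto
    then have "d1 \<noteq> 0 \<or> d2 \<noteq> 0" unfolding d1_def d2_def orient_def by auto
    then have Dpos: "D > 0" unfolding D_def by (simp add: sum_power2_gt_zero_iff)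
    define h where "h p = d1 * (fst p - fst (P u)) + d2 * (snd p - snd (P u)) - D / 2" for p
    obtain e where e: "e > 0" "\<forall>z\<in>X - {w}. e * \<bar>h (P z)\<bar> < g (P z)"
      using small_eps[of "X - {w}" "\<lambda>z. g (P z)" "\<lambda>z. h (P z)"] fin gpos by auto
    define \<alpha> where "\<alpha> = - c * d2 + e * d1"
    define \<beta> where "\<beta> = c * d1 + e * d2"
    define \<gamma> where "\<gamma> = c * (d2 * fst (P u) - d1 * snd (P u)) + e * (- fst (P u) * d1 - snd (P u) * d2 - D / 2)"
    have lam_eq: "lamf \<alpha> \<beta> \<gamma> p = g p + e * h p" for p
      unfolding lamf_def \<alpha>_def \<beta>_def \<gamma>_def g_def h_def orient_def d1_def d2_def
      by (simp add: algebra_simps)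
    have g0: "g (P u) = 0" "g (P w) = 0" unfolding g_def orient_def by simp_all
    have h0: "h (P u) = - D / 2" unfolding h_def by simp
    have h1: "h (P w) = D / 2" unfolding h_def D_def d1_def d2_def by (simp add: power2_eq_square field_simps)
    have lu: "lamf \<alpha> \<beta> \<gamma> (P u) < 0"
      unfolding lam_eq g0 h0 using e Dpos by simp
    have lw: "lamf \<alpha> \<beta> \<gamma> (P w) > 0"
      unfolding lam_eq g0 h1 using e Dpos by simp
    have lz: "lamf \<alpha> \<beta> \<gamma> (P z) > 0" if "z \<in> X" for z
    proof (cases "z = w")
      case True then show ?thesis using lw by simp
    next
      case False
      then have "e * \<bar>h (P z)\<bar> < g (P z)" using e that by auto
      moreover have "- (e * \<bar>h (P z)\<bar>) \<le> e * h (P z)" using mult_left_mono[of "- \<bar>h (P z)\<bar>" "h (P z)" e] e by simp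
      ultimately show ?thesis unfolding lam_eq by linarith
    qed
    have ab: "\<alpha>^2 + \<beta>^2 > 0"
    proof (rule ccontr)
      assume "\<not> ?thesis"
      then have "\<alpha> = 0" "\<beta> = 0" by (auto simp: sum_power2_gt_zero_iff)
      then show False using lu lw unfolding lamf_def by simp
    qed
    define pr where "pr z = (if z = v then u else z)" for z
    define Q where "Q z = projf \<alpha> \<beta> \<gamma> (P (pr z))" for z
    show ?thesis unfolding realizable_def
    proof (intro exI[of _ Q] ballI impI)
      fix x y z assume m: "x \<in> insert v X" "y \<in> insert v X" "z \<in> insert v X" and d: "distinct [x,y,z]"
      have prm: "pr a \<in> insert u X" if "a \<in> insert v X" for a using that unfolding pr_def by auto
      have prd: "distinct [pr x, pr y, pr z]" using d m assms(1,2) unfolding pr_def by auto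
      have Ls0: "(a = v \<and> lamf \<alpha> \<beta> \<gamma> (P (pr a)) < 0) \<or> (a \<noteq> v \<and> lamf \<alpha> \<beta> \<gamma> (P (pr a)) > 0)"
        if "a \<in> insert v X" for a
      proof (cases "a = v")
        case True then show ?thesis using lu unfolding pr_def by simp
      next
        case False then have "a \<in> X" using that by auto
        then show ?thesis using lz[of a] False unfolding pr_def by simp
      qed
      have Ls: "lamf \<alpha> \<beta> \<gamma> (P (pr a)) > 0 \<longleftrightarrow> a \<noteq> v" "lamf \<alpha> \<beta> \<gamma> (P (pr a)) \<noteq> 0"
        if "a \<in> insert v X" for a using Ls0[OF that] by auto
      have eq: "orient (Q x) (Q y) (Q z) = (\<alpha>^2 + \<beta>^2) * orient (P (pr x)) (P (pr y)) (P (pr z)) /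
          (lamf \<alpha> \<beta> \<gamma> (P (pr x)) * lamf \<alpha> \<beta> \<gamma> (P (pr y)) * lamf \<alpha> \<beta> \<gamma> (P (pr z)))"
        unfolding Q_def by (rule orient_projf) (use Ls m in auto)
      have Po: "orient (P (pr x)) (P (pr y)) (P (pr z)) \<noteq> 0 \<and> (chi (pr x) (pr y) (pr z) = 1 \<longleftrightarrow> orient (P (pr x)) (P (pr y)) (P (pr z)) > 0)"
        using P[OF prm prm prm prd] m by auto
      have sa: "orient (Q x) (Q y) (Q z) \<noteq> 0 \<and> (orient (Q x) (Q y) (Q z) > 0 \<longleftrightarrow>
          (orient (P (pr x)) (P (pr y)) (P (pr z)) > 0 \<longleftrightarrow>
           lamf \<alpha> \<beta> \<gamma> (P (pr x)) * lamf \<alpha> \<beta> \<gamma> (P (pr y)) * lamf \<alpha> \<beta> \<gamma> (P (pr z)) > 0))"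
        by (rule sign_aux[OF ab _ _ eq]) (use Po Ls m in auto)
      have sf: "chi (pr x) (pr y) (pr z) = 1 \<or> chi (pr x) (pr y) (pr z) = -1"
        using SF[OF ch prm prm prm prd] m by auto
      have tw: "twist chi u v x y z = (if x = v \<or> y = v \<or> z = v then - chi (pr x) (pr y) (pr z) else chi (pr x) (pr y) (pr z))"
      proof -
        consider "x = v" | "y = v" | "z = v" | "x \<noteq> v \<and> y \<noteq> v \<and> z \<noteq> v" by blast
        then show ?thesis
        proof cases
          case 1 then show ?thesis using SF[OF ch, of u y z] m d assms(1) unfolding twist_def pr_def by auto
        next
          case 2 then show ?thesis using SF[OF ch, of x u z] m d assms(1) unfolding twist_def pr_def by auto
        next
          case 3 then show ?thesis using m d assms(1) unfolding twist_def pr_def by auto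
        next
          case 4 then show ?thesis unfolding twist_def pr_def by auto
        qed
      qed
      have Lsign: "lamf \<alpha> \<beta> \<gamma> (P (pr x)) * lamf \<alpha> \<beta> \<gamma> (P (pr y)) * lamf \<alpha> \<beta> \<gamma> (P (pr z)) > 0 \<longleftrightarrow>
           \<not> (x = v \<or> y = v \<or> z = v)"
      proof -
        have nv: "\<not> (x = v \<and> y = v)" "\<not> (x = v \<and> z = v)" "\<not> (y = v \<and> z = v)" using d by auto
        show ?thesis using Ls[OF m(1)] Ls[OF m(2)] Ls[OF m(3)] nv
          by (auto simp: zero_less_mult_iff mult_less_0_iff)
      qed
      show "orient (Q x) (Q y) (Q z) \<noteq> 0 \<and> (twist chi u v x y z = 1 \<longleftrightarrow> orient (Q x) (Q y) (Q z) > 0)"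
        using sa Po sf tw Lsign by (auto split: if_splits)
    qed
  qed
qed


theorem proposition2p8:
  fixes chi :: "'a \<Rightarrow> 'a \<Rightarrow> 'a \<Rightarrow> int" and X :: "'a set" and u v :: 'a
  assumes "u \<notin> X" and "v \<notin> X"
    and "rooted_chirotope chi (insert u X) u"
  shows "chirotope (twist chi u v) (insert v X) \<and>
         (realizable chi (insert u X) \<longrightarrow> realizable (twist chi u v) (insert v X))"
  using twCh[OF assms] twReal[OF assms] by blast

end
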